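(* Let $x\in C[0,1]$ have Faber--Schauder development $$x=x(0)+(x(1)-x(0))e_\emptyset+\sum_{m=0}^\infty\sum_{k=0}^{2^m-1}\theta_{m,k}e_{m,k},\qquad \theta_{m,k}=2^{m/2}\Big(2x\big(\tfrac{2k+1}{2^{m+1}}\big)-x\big(\tfrac k{2^m}\big)-x\big(\tfrac{k+1}{2^m}\big)\Big),$$ and let $(\mathbb{T}_n)$ be the sequence of dyadic partitions. Then, for $t\in\bigcup_n\mathbb{T}_n$, the following conditions are equivalent. (a) The quadratic variation $\langle x\rangle_t$ (along the dyadic partitions) exists. (b) The limit $\ell_1(t):=\lim_{n\to\infty}\frac1{2^n}\sum_{m=0}^{n-1}\sum_{k=0}^{\lfloor (2^m-1)t\rfloor}\theta_{m,k}^2$ exists. (c) The limit $\ell_2(t):=\lim_{n\to\infty}\frac1{2^n}\sum_{k=0}^{\lfloor (2^n-1)t\rfloor}\theta_{n,k}^2$ exists. In this case, $\langle x\rangle_t=\ell_1(t)=\ell_2(t)$.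
   Context: The dyadic partitions are $\mathbb{T}_n=\{k2^{-n}: k=0,\dots,2^n\}$. For $s\in\mathbb{T}_n$, $s'$ denotes the successor of $s$ in $\mathbb{T}_n$ ($s'=\min\{t\in\mathbb{T}_n: t>s\}$ if $s<1$, and $s'=1$ if $s=1$). For $x\in C[0,1]$, $\langle x\rangle^n_t:=\sum_{s\in\mathbb{T}_n,\,s\le t}(x(s')-x(s))^2$, and $x$ admits the quadratic variation $\langle x\rangle_t$ at $t$ if $\langle x\rangle_t:=\lim_{n\to\infty}\langle x\rangle^n_t$ exists. The Faber--Schauder functions on $[0,1]$ are $e_\emptyset(t)=t$, $e_{0,0}(t)=\max\{0,\min\{t,1-t\}\}$, and $e_{n,k}(t)=2^{-n/2}e_{0,0}(2^nt-k)$ for $n\ge1$, $k=0,\dots,2^n-1$; every $x\in C[0,1]$ has the uniformly convergent development stated in the claim. *)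

theory Defs
  imports "HOL-Analysis.Analysis"
begin

definition dyadic_part :: "nat \<Rightarrow> real set" where
  "dyadic_part n = {real k / 2 ^ n | k. k \<le> 2 ^ n}"

definition dyadic_succ :: "nat \<Rightarrow> real \<Rightarrow> real" where
  "dyadic_succ n s = (if s < 1 then Min {u \<in> dyadic_part n. u > s} else 1)"

definition qv_n :: "(real \<Rightarrow> real) \<Rightarrow> nat \<Rightarrow> real \<Rightarrow> real" where
  "qv_n x n t = (\<Sum>s \<in> {s \<in> dyadic_part n. s \<le> t}. (x (dyadic_succ n s) - x s) ^ 2)"

definition fs_coeff :: "(real \<Rightarrow> real) \<Rightarrow> nat \<Rightarrow> nat \<Rightarrow> real" where
  "fs_coeff x m k = 2 powr (real m / 2) *
     (2 * x ((2 * real k + 1) / 2 ^ (m + 1)) - x (real k / 2 ^ m) - x ((real k + 1) / 2 ^ m))"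

definition ell1_seq :: "(real \<Rightarrow> real) \<Rightarrow> real \<Rightarrow> nat \<Rightarrow> real" where
  "ell1_seq x t n = (1 / 2 ^ n) *
     (\<Sum>m<n. \<Sum>k = 0..nat \<lfloor>(2 ^ m - 1) * t\<rfloor>. (fs_coeff x m k) ^ 2)"

definition ell2_seq :: "(real \<Rightarrow> real) \<Rightarrow> real \<Rightarrow> nat \<Rightarrow> real" where
  "ell2_seq x t n = (1 / 2 ^ n) *
     (\<Sum>k = 0..nat \<lfloor>(2 ^ n - 1) * t\<rfloor>. (fs_coeff x n k) ^ 2)"

end

theory Submission
  imports Defs
begin

lemma aux_ineq: "(a::real) \<le> q + r/2 \<Longrightarrow> b < r/2 \<Longrightarrow> a/2 + b/2 \<le> (q + r/2)/2 + r/4"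
  by (simp add: field_simps)

lemma avg_conv:
  fixes b c :: "nat \<Rightarrow> real"
  assumes rec: "\<And>n. b (Suc n) = (b n + c n)/2" and c: "c \<longlonglongrightarrow> L"
  shows "b \<longlonglongrightarrow> L"
proof -
  define e where "e n = b n - L" for n
  have e_rec: "e (Suc n) = e n / 2 + (c n - L)/2" for n using rec[of n] by (simp add: e_def field_simps)
  show ?thesis
  proof (rule LIMSEQ_I)
    fix r :: real assume r: "0 < r"
    from LIMSEQ_D[OF c, of "r/2"] r obtain M where M: "\<forall>n\<ge>M. norm (c n - L) < r/2" by auto
    have bound: "\<bar>e (M+i)\<bar> \<le> \<bar>e M\<bar> / 2^i + r/2" for i
    proof (induction i)
      case 0 show ?case using r by simp
    next
      case (Suc i)
      have "\<bar>e (M + Suc i)\<bar> = \<bar>e (M+i)/2 + (c (M+i) - L)/2\<bar>" using e_rec[of "M+i"] by simp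
      also have "\<dots> \<le> \<bar>e (M+i)\<bar>/2 + \<bar>c (M+i) - L\<bar>/2" by (simp add: abs_triangle_ineq[THEN order_trans])
      also have "\<dots> \<le> (\<bar>e M\<bar>/2^i + r/2)/2 + r/4" proof -
        have "norm (c (M+i) - L) < r/2" using M by auto
        then show ?thesis using Suc.IH aux_ineq[of "\<bar>e (M+i)\<bar>" "\<bar>e M\<bar> / 2^i" r "\<bar>c (M+i) - L\<bar>"] by simp
      qed
      also have "\<dots> = \<bar>e M\<bar>/2^Suc i + r/2" by (simp add: field_simps)
      finally show ?case .
    qed
    obtain i where i: "(1/2::real)^i < r/(2*(\<bar>e M\<bar>+1))"
      using real_arch_pow_inv[of "r/(2*(\<bar>e M\<bar>+1))" "1/2::real"] r by auto
    have i2: "\<bar>e M\<bar> / 2^i < r/2"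
    proof -
      have "\<bar>e M\<bar> / 2^i \<le> (\<bar>e M\<bar>+1) * (1/2)^i" by (simp add: power_one_over field_simps)
      also have "\<dots> < (\<bar>e M\<bar>+1) * (r/(2*(\<bar>e M\<bar>+1)))" using i by (intro mult_strict_left_mono) auto
      also have "\<dots> = r/2" by (simp add: field_simps)
      finally show ?thesis .
    qed
    show "\<exists>no. \<forall>n\<ge>no. norm (b n - L) < r"
    proof (intro exI allI impI)
      fix n assume n: "n \<ge> M + i"
      then obtain j where j: "n = M + (i + j)" by (metis le_add_iff1 add.assoc le_iff_add)
      have "\<bar>e M\<bar> / 2^(i+j) \<le> \<bar>e M\<bar> / 2^i"
        by (intro divide_left_mono) (auto simp: power_add)
      then have "\<bar>e n\<bar> < r" using bound[of "i+j"] i2 unfolding j by linarith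
      then show "norm (b n - L) < r" by (simp add: e_def)
    qed
  qed
qed

lemma conv_diff:
  fixes f g :: "nat \<Rightarrow> real"
  assumes "(\<lambda>n. f n - g n) \<longlonglongrightarrow> 0"
  shows "(convergent f \<longleftrightarrow> convergent g) \<and> (convergent f \<longrightarrow> lim f = lim g)"
proof -
  have 1: "g \<longlonglongrightarrow> L" if "f \<longlonglongrightarrow> L" for L
    using tendsto_diff[OF that assms] by simp
  have 2: "f \<longlonglongrightarrow> L" if "g \<longlonglongrightarrow> L" for L
    using tendsto_add[OF that assms] by simp
  show ?thesis using 1 2 by (metis convergent_def limI)
qed

lemma ell1_rec: "ell1_seq x t (Suc n) = (ell1_seq x t n + ell2_seq x t n) / 2"
  unfolding ell1_seq_def ell2_seq_def by (simp add: field_simps)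

lemma ell12:
  "(convergent (ell1_seq x t) \<longleftrightarrow> convergent (ell2_seq x t)) \<and>
   (convergent (ell1_seq x t) \<longrightarrow> lim (ell1_seq x t) = lim (ell2_seq x t))"
proof -
  have 1: "ell2_seq x t \<longlonglongrightarrow> L" if "ell1_seq x t \<longlonglongrightarrow> L" for L
  proof -
    have "(\<lambda>n. 2 * ell1_seq x t (Suc n) - ell1_seq x t n) \<longlonglongrightarrow> 2 * L - L"
      using that by (intro tendsto_intros LIMSEQ_Suc)
    moreover have "(\<lambda>n. 2 * ell1_seq x t (Suc n) - ell1_seq x t n) = ell2_seq x t"
      by (rule ext) (simp add: ell1_rec field_simps)
    ultimately show ?thesis by simp
  qed
  have 2: "ell1_seq x t \<longlonglongrightarrow> L" if "ell2_seq x t \<longlonglongrightarrow> L" for L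
    by (rule avg_conv[OF ell1_rec that])
  show ?thesis using 1 2 by (metis convergent_def limI)
qed


lemma dyadic_part_eq: "dyadic_part n = (\<lambda>k. real k / 2^n) ` {..2^n}"
  unfolding dyadic_part_def by auto

lemma dyadic_succ_eq:
  assumes "k \<le> 2^n"
  shows "dyadic_succ n (real k / 2^n) = min 1 ((real k + 1) / 2^n)"
proof (cases "k < 2^n")
  case True
  have kn: "real k + 1 \<le> 2^n" using True
    by (metis Suc_leI of_nat_Suc of_nat_le_iff of_nat_numeral of_nat_power add.commute)
  have lt: "real k / 2^n < 1" using True
    by (simp add: divide_less_eq)
  have "Min {u \<in> dyadic_part n. u > real k / 2^n} = (real k + 1) / 2^n"
  proof (rule Min_eqI)
    show "finite {u \<in> dyadic_part n. u > real k / 2^n}" unfolding dyadic_part_eq by auto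
    show "(real k + 1) / 2^n \<in> {u \<in> dyadic_part n. u > real k / 2^n}"
      unfolding dyadic_part_eq using True
      by (auto simp: divide_strict_right_mono intro!: image_eqI[where x="Suc k"])
    fix y assume "y \<in> {u \<in> dyadic_part n. u > real k / 2^n}"
    then obtain l where y: "y = real l / 2^n" and gt: "real l / 2^n > real k / 2^n"
      unfolding dyadic_part_eq by auto
    from mult_strict_right_mono[OF gt, of "2^n"] have "real k < real l" by simp
    then have "Suc k \<le> l" by simp
    then have "real k + 1 \<le> real l" by (metis of_nat_Suc of_nat_le_iff add.commute)
    then show "(real k + 1) / 2^n \<le> y" unfolding y by (simp add: divide_right_mono)
  qed
  moreover have "min 1 ((real k + 1) / 2^n) = (real k + 1) / 2^n" using kn by simp
  ultimately show ?thesis using lt unfolding dyadic_succ_def by simp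
next
  case False
  then have k: "k = 2^n" using assms by simp
  have "real k / 2^n = 1" using k by simp
  moreover have "min 1 ((real k + 1) / 2^n) = 1" using k by simp
  ultimately show ?thesis unfolding dyadic_succ_def by simp
qed


definition DD :: "(real \<Rightarrow> real) \<Rightarrow> nat \<Rightarrow> nat \<Rightarrow> real" where
  "DD x n k = x ((real k + 1) / 2^n) - x (real k / 2^n)"

lemma qv_formula:
  assumes "p \<le> 2^n"
  shows "qv_n x n (real p / 2^n) = (\<Sum>k<p. (DD x n k)^2)
          + (x (min 1 ((real p + 1) / 2^n)) - x (real p / 2^n))^2"
proof -
  have set: "{s \<in> dyadic_part n. s \<le> real p / 2^n} = (\<lambda>k. real k / 2^n) ` {..p}"
  proof
    show "{s \<in> dyadic_part n. s \<le> real p / 2^n} \<subseteq> (\<lambda>k. real k / 2^n) ` {..p}"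
    proof
      fix s assume "s \<in> {s \<in> dyadic_part n. s \<le> real p / 2^n}"
      then obtain k where s: "s = real k / 2^n" and le: "real k / 2^n \<le> real p / 2^n"
        unfolding dyadic_part_eq by auto
      from mult_right_mono[OF le, of "2^n"] have "k \<le> p" by simp
      then show "s \<in> (\<lambda>k. real k / 2^n) ` {..p}" using s by auto
    qed
    show "(\<lambda>k. real k / 2^n) ` {..p} \<subseteq> {s \<in> dyadic_part n. s \<le> real p / 2^n}"
      unfolding dyadic_part_eq using assms by (auto simp: divide_right_mono)
  qed
  have inj: "inj_on (\<lambda>k. real k / 2^n) {..p}" by (auto simp: inj_on_def)
  have "qv_n x n (real p / 2^n) = (\<Sum>k\<le>p. (x (dyadic_succ n (real k / 2^n)) - x (real k / 2^n))^2)"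
    unfolding qv_n_def set by (simp add: sum.reindex[OF inj])
  also have "\<dots> = (\<Sum>k<p. (x (dyadic_succ n (real k / 2^n)) - x (real k / 2^n))^2)
       + (x (dyadic_succ n (real p / 2^n)) - x (real p / 2^n))^2"
    by (simp add: lessThan_Suc_atMost[symmetric])
  also have "(\<Sum>k<p. (x (dyadic_succ n (real k / 2^n)) - x (real k / 2^n))^2) = (\<Sum>k<p. (DD x n k)^2)"
  proof (rule sum.cong)
    fix k assume "k \<in> {..<p}"
    then have k: "k < 2^n" using assms by simp
    then have "real k + 1 \<le> 2^n"
      by (metis Suc_leI of_nat_Suc of_nat_le_iff of_nat_numeral of_nat_power add.commute)
    then show "(x (dyadic_succ n (real k / 2^n)) - x (real k / 2^n))^2 = (DD x n k)^2"
      using k by (simp add: dyadic_succ_eq DD_def)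
  qed simp
  finally show ?thesis using assms by (simp add: dyadic_succ_eq)
qed

lemma powr_sq: "(2 powr (real n / 2))^2 = (2::real)^n"
proof -
  have "(2 powr (real n / 2))^2 = 2 powr (real n / 2) * 2 powr (real n / 2)" by (simp add: power2_eq_square)
  also have "\<dots> = 2 powr (real n)" by (simp add: powr_add[symmetric])
  also have "\<dots> = 2^n" by (simp add: powr_realpow)
  finally show ?thesis .
qed

lemma DD_split: "(DD x (Suc n) (2*k))^2 + (DD x (Suc n) (2*k+1))^2
   = (DD x n k)^2 / 2 + (fs_coeff x n k)^2 / 2^(Suc n)"
proof -
  define l where "l = x (real k / 2^n)"
  define m where "m = x ((2 * real k + 1) / 2 ^ (n + 1))"
  define r where "r = x ((real k + 1) / 2^n)"
  have e1: "real (2*k) / 2^Suc n = real k / 2^n" by (simp add: field_simps)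
  have e2: "(real (2*k) + 1) / 2^Suc n = (2 * real k + 1) / 2 ^ (n + 1)" by simp
  have e3: "real (2*k+1) / 2^Suc n = (2 * real k + 1) / 2 ^ (n + 1)" by simp
  have e4: "(real (2*k+1) + 1) / 2^Suc n = (real k + 1) / 2^n" by (simp add: field_simps)
  have d1: "DD x (Suc n) (2*k) = m - l" unfolding DD_def m_def l_def using e1 e2 by simp
  have d2: "DD x (Suc n) (2*k+1) = r - m" unfolding DD_def m_def r_def using e3 e4
    by (simp only:)
  have d0: "DD x n k = r - l" unfolding DD_def r_def l_def by simp
  have f: "(fs_coeff x n k)^2 = 2^n * (2*m - l - r)^2"
    unfolding fs_coeff_def m_def l_def r_def by (simp add: power_mult_distrib powr_sq)
  show ?thesis unfolding d1 d2 d0 f by (simp add: field_simps power2_eq_square)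
qed


lemma Q_step: "(\<Sum>k<2*p. (DD x (Suc n) k)^2) = (\<Sum>k<p. (DD x n k)^2) / 2 + (\<Sum>k<p. (fs_coeff x n k)^2) / 2^(Suc n)"
proof (induction p)
  case 0 then show ?case by simp
next
  case (Suc p)
  have "2 * Suc p = Suc (Suc (2*p))" by simp
  then have "(\<Sum>k<2*Suc p. (DD x (Suc n) k)^2) = (\<Sum>k<2*p. (DD x (Suc n) k)^2)
      + ((DD x (Suc n) (2*p))^2 + (DD x (Suc n) (2*p+1))^2)" by simp
  also have "\<dots> = (\<Sum>k<p. (DD x n k)^2) / 2 + (\<Sum>k<p. (fs_coeff x n k)^2) / 2^(Suc n)
      + ((DD x n p)^2 / 2 + (fs_coeff x n p)^2 / 2^(Suc n))" unfolding Suc.IH DD_split ..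
  also have "\<dots> = (\<Sum>k<Suc p. (DD x n k)^2) / 2 + (\<Sum>k<Suc p. (fs_coeff x n k)^2) / 2^(Suc n)"
    by (simp add: add_divide_distrib)
  finally show ?case .
qed

lemma Q_iter: "2^(N+i) * (\<Sum>k<j*2^i. (DD x (N+i) k)^2) = 2^N * (\<Sum>k<j. (DD x N k)^2)
   + (\<Sum>i'<i. \<Sum>k<j*2^i'. (fs_coeff x (N+i') k)^2)"
proof (induction i)
  case 0 then show ?case by simp
next
  case (Suc i)
  have eq: "(\<Sum>k<j*2^Suc i. (DD x (N+Suc i) k)^2) = (\<Sum>k<2*(j*2^i). (DD x (Suc (N+i)) k)^2)"
    by (simp add: mult_ac)
  have "2^(N+Suc i) * (\<Sum>k<j*2^Suc i. (DD x (N+Suc i) k)^2)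
     = 2^(N+i) * (\<Sum>k<j*2^i. (DD x (N+i) k)^2) + (\<Sum>k<j*2^i. (fs_coeff x (N+i) k)^2)"
    unfolding eq Q_step by (simp add: field_simps)
  then show ?case unfolding Suc.IH by simp
qed

lemma floor_lemma:
  assumes "0 < j" "j \<le> (2::nat)^N"
  shows "nat \<lfloor>(2^(N+i) - 1) * (real j / 2^N)\<rfloor> = j*2^i - 1"
proof -
  have tpos: "0 < real j / 2^N" using assms by simp
  have tle: "real j / 2^N \<le> 1" using assms by (simp add: divide_le_eq)
  have eq: "(2^(N+i) - 1) * (real j / 2^N) = real (j*2^i) - real j / 2^N"
    by (simp add: field_simps power_add)
  have ge1: "1 \<le> j*2^i" using assms by simp
  have "\<lfloor>(2^(N+i) - 1) * (real j / 2^N)\<rfloor> = int (j*2^i) - 1"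
    unfolding eq floor_eq_iff using tpos tle ge1 by auto
  moreover have h: "nat (int m - 1) = m - 1" for m :: nat by arith
  ultimately show ?thesis by metis
qed

lemma sum_split_nat: "(\<Sum>m<N+i. f m) = (\<Sum>m<N. f m) + (\<Sum>i'<i. f (N+i'))"
  for f :: "nat \<Rightarrow> real"
  by (induction i) auto

lemma xlim:
  assumes "continuous_on {0..1} x" "y \<longlonglongrightarrow> l" "l \<in> {0..1}" "\<And>n. y n \<in> {0..1}"
  shows "(\<lambda>n. x (y n)) \<longlonglongrightarrow> x (l::real)"
  using continuous_on_tendsto_compose[OF assms(1,2,3)] assms(4) by simp


lemma alg: "Q = (A+S)/(d::real) \<Longrightarrow> Q + e - (C+S)/d = (A - C)/d + e"
  by (simp add: add_divide_distrib diff_divide_distrib)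

lemma qv_ell1_diff:
  fixes x :: "real \<Rightarrow> real" and t :: real
  assumes cont: "continuous_on {0..1} x"
    and tD: "t \<in> (\<Union>n. dyadic_part n)"
  shows "(\<lambda>n. qv_n x n t - ell1_seq x t n) \<longlonglongrightarrow> 0"
proof -
  from tD obtain N j where j: "j \<le> 2^N" and t: "t = real j / 2^N" unfolding dyadic_part_def by auto
  have jr: "real j \<le> 2^N" using j
    by (metis of_nat_le_iff of_nat_numeral of_nat_power)
  have t01: "t \<in> {0..1}" using jr by (simp add: t divide_le_eq)
  define E where "E n = (x (min 1 (t + 1/2^n)) - x t)^2" for n
  have E0: "E \<longlonglongrightarrow> 0"
  proof -
    have y: "(\<lambda>n. min 1 (t + 1/2^n)) \<longlonglongrightarrow> min 1 (t + 0)"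
      by (intro tendsto_intros LIMSEQ_divide_realpow_zero) simp
    have "min 1 (t + 0) = t" using t01 by simp
    with y have y': "(\<lambda>n. min 1 (t + 1/2^n)) \<longlonglongrightarrow> t" by simp
    have "(\<lambda>n. x (min 1 (t + 1/2^n))) \<longlonglongrightarrow> x t"
      using t01 by (intro xlim[OF cont y']) (auto simp: min_def)
    then have "(\<lambda>n. (x (min 1 (t + 1/2^n)) - x t)^2) \<longlonglongrightarrow> (x t - x t)^2"
      by (intro tendsto_intros)
    then show ?thesis by (simp add: E_def[abs_def])
  qed
  show ?thesis
  proof (cases "j = 0")
    case True
    then have t0: "t = 0" by (simp add: t)
    have qv: "qv_n x n t = E n" for n using qv_formula[of 0 n x] by (simp add: t0 E_def)
    have e2: "ell2_seq x t n = (2 * x (1/2^(n+1)) - x 0 - x (1/2^n))^2" for n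
      by (simp add: ell2_seq_def t0 fs_coeff_def power_mult_distrib powr_sq)
    have h1: "(\<lambda>n. (1::real)/2^(n+1)) \<longlonglongrightarrow> 0"
      using LIMSEQ_ignore_initial_segment[OF LIMSEQ_divide_realpow_zero[of 2 1], of 1] by simp
    have h2: "(\<lambda>n. (1::real)/2^n) \<longlonglongrightarrow> 0"
      using LIMSEQ_divide_realpow_zero[of 2 1] by simp
    have p2: "(1::real) \<le> 2 * 2^n" for n by (induction n) simp_all
    have a1: "(\<lambda>n. x (1/2^(n+1))) \<longlonglongrightarrow> x 0" by (rule xlim[OF cont h1]) (auto simp: p2)
    have a2: "(\<lambda>n. x (1/2^n)) \<longlonglongrightarrow> x 0" by (rule xlim[OF cont h2]) auto
    have "(\<lambda>n. (2 * x (1/2^(n+1)) - x 0 - x (1/2^n))^2) \<longlonglongrightarrow> (2 * x 0 - x 0 - x 0)^2"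
      by (intro tendsto_intros a1 a2)
    then have l2: "ell2_seq x t \<longlonglongrightarrow> 0" unfolding e2 by simp
    have l1: "ell1_seq x t \<longlonglongrightarrow> 0" by (rule avg_conv[OF ell1_rec l2])
    show ?thesis using tendsto_diff[OF E0 l1] unfolding qv by simp
  next
    case False
    then have jpos: "0 < j" by simp
    define K where "K = 2^N * (\<Sum>k<j. (DD x N k)^2)
        - (\<Sum>m<N. \<Sum>k = 0..nat \<lfloor>(2^m - 1) * t\<rfloor>. (fs_coeff x m k)^2)"
    have diff: "qv_n x n t - ell1_seq x t n = K/2^n + E n" if nN: "n \<ge> N" for n
    proof -
      obtain i where n: "n = N + i" using le_Suc_ex[OF nN] by (elim exE)
      have tn: "t = real (j*2^i) / 2^(N+i)" by (simp add: t power_add)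
      have le: "j*2^i \<le> 2^(N+i)" using j by (simp add: power_add)
      have r1: "(real (j*2^i) + 1) / 2^(N+i) = t + 1/2^(N+i)"
        by (simp add: tn add_divide_distrib)
      have qv: "qv_n x n t = (\<Sum>k<j*2^i. (DD x (N+i) k)^2) + E n"
        using qv_formula[OF le, of x] unfolding r1 tn[symmetric] by (simp add: E_def n)
      define S where "S = (\<Sum>i'<i. \<Sum>k<j*2^i'. (fs_coeff x (N+i') k)^2)"
      define C1 where "C1 = (\<Sum>m<N. \<Sum>k = 0..nat \<lfloor>(2^m - 1) * t\<rfloor>. (fs_coeff x m k)^2)"
      have setq: "{0..nat \<lfloor>(2^(N+i') - 1) * t\<rfloor>} = {..<j*2^i'}" for i'
      proof -
        have "nat \<lfloor>(2^(N+i') - 1) * t\<rfloor> = j*2^i' - 1" using floor_lemma[OF jpos j] by (simp add: t)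
        moreover have "1 \<le> j*2^i'" using jpos by simp
        moreover have gen: "{0..m-1} = {..<m}" if "1 \<le> m" for m :: nat using that by auto
        ultimately show ?thesis by metis
      qed
      have ell1: "ell1_seq x t n = (C1 + S) / 2^n"
        unfolding ell1_seq_def n sum_split_nat C1_def S_def setq by simp
      have qi: "2^n * (\<Sum>k<j*2^i. (DD x (N+i) k)^2) = 2^N * (\<Sum>k<j. (DD x N k)^2) + S"
        unfolding n S_def by (rule Q_iter)
      have "(\<Sum>k<j*2^i. (DD x (N+i) k)^2) = (2^N * (\<Sum>k<j. (DD x N k)^2) + S) / 2^n"
        using qi by (simp add: field_simps)
      then show ?thesis unfolding qv ell1 K_def C1_def[symmetric] by (rule alg)
    qed
    have "(\<lambda>n. K/2^n + E n) \<longlonglongrightarrow> 0 + 0"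
      by (intro tendsto_add LIMSEQ_divide_realpow_zero E0) simp
    then have "(\<lambda>i. K/2^(i+N) + E (i+N)) \<longlonglongrightarrow> 0"
      using LIMSEQ_ignore_initial_segment by fastforce
    then have "(\<lambda>i. qv_n x (i+N) t - ell1_seq x t (i+N)) \<longlonglongrightarrow> 0" using diff by simp
    then show ?thesis by (rule LIMSEQ_offset)
  qed
qed

theorem proposition2p1:
  fixes x :: "real \<Rightarrow> real" and t :: real
  assumes "continuous_on {0..1} x"
    and "t \<in> (\<Union>n. dyadic_part n)"
  shows "(convergent (\<lambda>n. qv_n x n t) \<longleftrightarrow> convergent (ell1_seq x t))
       \<and> (convergent (ell1_seq x t) \<longleftrightarrow> convergent (ell2_seq x t))
       \<and> (convergent (\<lambda>n. qv_n x n t) \<longrightarrow>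
            lim (\<lambda>n. qv_n x n t) = lim (ell1_seq x t)
            \<and> lim (ell1_seq x t) = lim (ell2_seq x t))"
  using conv_diff[OF qv_ell1_diff[OF assms]] ell12[of x t] by blast

end
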